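(* Let $X \subseteq \mathbb{Z}^d$ be a finite lattice-convex set, let $H$ be a hiding set for $X$, and assume there exists $h \in H \setminus \mathrm{obs}(X)$. Then, for every $y \in \mathrm{obs}(X) \cap \mathrm{conv}(\{h\} \cup X)$, the set $(H \setminus \{h\}) \cup \{y\}$ is a hiding set for $X$. In particular, there is a maximum size hiding set for $X$ contained in $\mathrm{obs}(X)$.
   Context: A set $X \subseteq \mathbb{Z}^d$ is lattice-convex if $\mathrm{conv}(X) \cap \mathbb{Z}^d = X$. An observer of $X$ is a point $z \in \mathbb{Z}^d \setminus X$ such that $\mathrm{conv}(X \cup \{z\}) \cap \mathbb{Z}^d = X \cup \{z\}$; $\mathrm{obs}(X)$ is the set of observers. A set $H \subseteq (\mathrm{aff}(X) \cap \mathbb{Z}^d) \setminus X$ is a hiding set for $X$ if for all distinct $x,y \in H$ one has $\mathrm{conv}(\{x,y\}) \cap \mathrm{conv}(X) \ne \emptyset$. *)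

theory Defs
  imports "HOL-Analysis.Analysis"
begin

definition lattice :: "(real ^ 'd) set" where
  "lattice = {x. \<forall>i. x $ i \<in> \<int>}"

definition lattice_convex :: "(real ^ 'd) set \<Rightarrow> bool" where
  "lattice_convex X \<longleftrightarrow> X \<subseteq> lattice \<and> convex hull X \<inter> lattice = X"

definition obs :: "(real ^ 'd) set \<Rightarrow> (real ^ 'd) set" where
  "obs X = {z \<in> lattice - X. convex hull (insert z X) \<inter> lattice = insert z X}"

definition hiding_set :: "(real ^ 'd) set \<Rightarrow> (real ^ 'd) set \<Rightarrow> bool" where
  "hiding_set X H \<longleftrightarrow> H \<subseteq> (affine hull X \<inter> lattice) - X \<and>
     (\<forall>x\<in>H. \<forall>y\<in>H. x \<noteq> y \<longrightarrow> convex hull {x, y} \<inter> convex hull X \<noteq> {})"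

end

theory Submission
  imports Defs
begin

lemma fin_lat: "finite (lattice \<inter> {x::real^'d. norm x \<le> M})"
proof -
  let ?K = "\<lceil>M\<rceil>"
  have "lattice \<inter> {x::real^'d. norm x \<le> M} \<subseteq>
     (\<lambda>f. \<chi> i. real_of_int (f i)) ` (Pi\<^sub>E UNIV (\<lambda>_. {-?K..?K}))"
  proof
    fix x :: "real^'d" assume x: "x \<in> lattice \<inter> {x. norm x \<le> M}"
    have "\<And>i. x $ i \<in> \<int>" using x by (auto simp: lattice_def)
    hence e: "\<And>i. real_of_int \<lfloor>x $ i\<rfloor> = x $ i" by (metis Ints_cases floor_of_int)
    have "\<And>i. \<bar>x $ i\<bar> \<le> M" using x component_le_norm_cart[of x] by (meson IntD2 mem_Collect_eq order_trans)
    hence "\<And>i. \<lfloor>x $ i\<rfloor> \<in> {-?K..?K}"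
    proof -
      fix i
      have a: "-M \<le> x $ i" "x $ i \<le> M" using \<open>\<And>i. \<bar>x $ i\<bar> \<le> M\<close>[of i] by linarith+
      have "\<lfloor>x $ i\<rfloor> \<le> ?K" using a(2) by (meson ceiling_correct floor_le_iff le_floor_iff order_trans floor_le_ceiling floor_mono)
      moreover have "-?K \<le> \<lfloor>x $ i\<rfloor>" using a(1)
        by (simp add: ceiling_def floor_mono)
      ultimately show "\<lfloor>x $ i\<rfloor> \<in> {-?K..?K}" by auto
    qed
    hence "(\<lambda>i. \<lfloor>x $ i\<rfloor>) \<in> Pi\<^sub>E UNIV (\<lambda>_. {-?K..?K})" by auto
    moreover have "x = (\<chi> i. real_of_int ((\<lambda>i. \<lfloor>x $ i\<rfloor>) i))" by (rule vec_eq_iff[THEN iffD2]) (simp only: vec_lambda_beta e, simp)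
    ultimately show "x \<in> (\<lambda>f. \<chi> i. real_of_int (f i)) ` (Pi\<^sub>E UNIV (\<lambda>_. {-?K..?K}))" by (metis image_eqI)
  qed
  moreover have "finite (Pi\<^sub>E (UNIV::'d set) (\<lambda>_. {-?K..?K}))" by (rule finite_PiE) auto
  ultimately show ?thesis by (meson finite_imageI finite_subset)
qed

lemma fin_lat_bounded: "bounded (S::(real^'d) set) \<Longrightarrow> finite (lattice \<inter> S)"
proof -
  assume "bounded S"
  then obtain b where "\<forall>x\<in>S. norm x \<le> b" by (auto simp: bounded_pos)
  hence "lattice \<inter> S \<subseteq> lattice \<inter> {x. norm x \<le> b}" by auto
  thus ?thesis using fin_lat finite_subset by blast
qed

lemma hull_fin: "finite X \<Longrightarrow> finite (convex hull (insert (z::real^'d) X) \<inter> lattice)"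
  using fin_lat_bounded[of "convex hull (insert z X)"]
  by (simp add: Int_commute compact_imp_bounded finite_imp_compact_convex_hull)

lemma dir_lem:
  fixes x y :: "real^'d"
  assumes B: "B > 0" and nx: "norm x \<ge> 8*B" and ny: "norm y \<ge> 8*B" and t: "0 \<le> t" "t \<le> 1"
    and p: "norm ((1-t) *\<^sub>R x + t *\<^sub>R y) \<le> B"
  shows "norm (sgn x + sgn y) \<le> 4/7"
proof -
  define a where "a = (1-t) * norm x"
  define b where "b = t * norm y"
  have x0: "x \<noteq> 0" "y \<noteq> 0" using nx ny B by auto
  have ea: "a *\<^sub>R sgn x = (1-t) *\<^sub>R x" using x0 by (simp add: a_def sgn_div_norm)
  have eb: "b *\<^sub>R sgn y = t *\<^sub>R y" using x0 by (simp add: b_def sgn_div_norm)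
  have na: "a = norm ((1-t) *\<^sub>R x)" using t by (simp add: a_def)
  have nb: "b = norm (t *\<^sub>R y)" using t by (simp add: b_def)
  have ab: "\<bar>a - b\<bar> \<le> B"
  proof -
    have "a \<le> norm ((1-t) *\<^sub>R x + t *\<^sub>R y) + b" unfolding na nb
      by (metis add_diff_cancel_right' norm_triangle_ineq4)
    moreover have "b \<le> norm ((1-t) *\<^sub>R x + t *\<^sub>R y) + a" unfolding na nb
      by (metis add_diff_cancel_left' norm_triangle_ineq4 add.commute)
    ultimately show ?thesis using p by linarith
  qed
  have "a + b \<ge> 8*B"
  proof -
    have "(1-t) * norm x \<ge> (1-t) * (8*B)" using t nx by (intro mult_left_mono) auto
    moreover have "t * norm y \<ge> t * (8*B)" using t ny by (intro mult_left_mono) auto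
    ultimately show ?thesis unfolding a_def b_def by (simp add: algebra_simps)
  qed
  hence a7: "a \<ge> 7/2*B" using ab by linarith
  have "a *\<^sub>R (sgn x + sgn y) = ((1-t) *\<^sub>R x + t *\<^sub>R y) + (a - b) *\<^sub>R sgn y"
    using ea eb by (simp add: algebra_simps)
  hence "norm (a *\<^sub>R (sgn x + sgn y)) \<le> B + \<bar>a - b\<bar>"
    using p x0 by (metis norm_triangle_le add_mono norm_scaleR norm_sgn mult.right_neutral order_refl)
  hence "a * norm (sgn x + sgn y) \<le> 2*B" using ab a7 B by simp
  hence "(7/2*B) * norm (sgn x + sgn y) \<le> 2*B"
    by (smt (verit, best) a7 mult_right_mono norm_ge_zero)
  thus ?thesis using B by (simp add: field_simps)
qed

lemma seg_pt: "closed_segment x y \<inter> S \<noteq> {} \<Longrightarrow> \<exists>t. 0 \<le> t \<and> t \<le> 1 \<and> (1-t) *\<^sub>R x + t *\<^sub>R y \<in> S"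
  unfolding closed_segment_def by blast

lemma three_lem:
  fixes x y z :: "real^'d"
  assumes B: "B > 0" and nx: "norm x \<ge> 8*B" and ny: "norm y \<ge> 8*B" and nz: "norm z \<ge> 8*B"
    and K: "K \<subseteq> cball 0 B"
    and s1: "closed_segment x y \<inter> K \<noteq> {}" and s2: "closed_segment x z \<inter> K \<noteq> {}"
    and s3: "closed_segment y z \<inter> K \<noteq> {}"
  shows False
proof -
  have d: "norm (sgn u + sgn v) \<le> 4/7" if hh: "norm u \<ge> 8*B" "norm v \<ge> 8*B" "closed_segment u v \<inter> K \<noteq> {}"
    for u v :: "real^'d"
  proof -
    obtain t where "0 \<le> t" "t \<le> 1" "(1-t) *\<^sub>R u + t *\<^sub>R v \<in> K" using seg_pt[OF hh(3)] by blast
    thus ?thesis using dir_lem[OF B hh(1,2)] K by auto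
  qed
  have 1: "norm (sgn x + sgn y) \<le> 4/7" using d nx ny s1 by blast
  have 2: "norm (sgn x + sgn z) \<le> 4/7" using d nx nz s2 by blast
  have 3: "norm (sgn y + sgn z) \<le> 4/7" using d ny nz s3 by blast
  have "2 *\<^sub>R sgn x = (sgn x + sgn y) + (sgn x + sgn z) - (sgn y + sgn z)" by (simp add: algebra_simps scaleR_2)
  hence "norm (2 *\<^sub>R sgn x) \<le> 4/7 + 4/7 + 4/7" using 1 2 3
    by (metis add_mono norm_triangle_le norm_triangle_le_diff)
  moreover have "x \<noteq> 0" using nx B by auto
  ultimately show False by (simp add: norm_sgn)
qed

lemma cross_lem:
  fixes x h y c p :: "real^'d"
  assumes K: "convex K" and p: "p \<in> closed_segment x h" "p \<in> K" and c: "c \<in> K"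
    and y: "y = u *\<^sub>R h + v *\<^sub>R c" and uv: "u \<ge> 0" "v \<ge> 0" "u + v = 1"
  shows "closed_segment x y \<inter> K \<noteq> {}"
proof (cases "u = 0")
  case True
  hence "y = c" using y uv by simp
  thus ?thesis using c by auto
next
  case False
  obtain s where s: "0 \<le> s" "s \<le> 1" "p = (1-s) *\<^sub>R x + s *\<^sub>R h"
    using p(1) unfolding closed_segment_def by blast
  define DD where "DD = u + s * v"
  have DD: "DD > 0" using False uv s by (simp add: DD_def add_pos_nonneg)
  define q where "q = (1/DD) *\<^sub>R (u *\<^sub>R p + (s * v) *\<^sub>R c)"
  have "q = (u/DD) *\<^sub>R p + ((s * v)/DD) *\<^sub>R c" by (simp add: q_def scaleR_add_right)
  moreover have "u/DD + (s * v)/DD = 1" using DD by (simp add: add_divide_distrib[symmetric] DD_def)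
  ultimately have qK: "q \<in> K" using K p(2) c DD uv s
    by (metis convexD divide_nonneg_pos mult_nonneg_nonneg)
  have e: "u *\<^sub>R p + (s * v) *\<^sub>R c = (u*(1-s)) *\<^sub>R x + s *\<^sub>R y"
  proof -
    have vv: "v = 1 - u" using uv(3) by linarith
    show ?thesis unfolding vec_eq_iff s(3) y vv by (simp add: algebra_simps)
  qed
  have "q = (1 - s/DD) *\<^sub>R x + (s/DD) *\<^sub>R y"
  proof -
    have vv: "v = 1 - u" using uv(3) by linarith
    have "1 - s/DD = (u*(1-s))/DD" using DD by (simp add: DD_def vv field_simps)
    thus ?thesis unfolding q_def e by (simp add: scaleR_add_right)
  qed
  moreover have "s \<le> DD"
  proof -
    have vv: "v = 1 - u" using uv(3) by linarith
    have "DD - s = u * (1 - s)" unfolding DD_def vv by (simp add: algebra_simps)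
    moreover have "u * (1 - s) \<ge> 0" using uv s by simp
    ultimately show ?thesis by linarith
  qed
  hence "0 \<le> s/DD" "s/DD \<le> 1" using DD s by auto
  ultimately have "q \<in> closed_segment x y" unfolding closed_segment_def by blast
  thus ?thesis using qK by blast
qed

lemma no_back:
  fixes h y b q :: "real^'d"
  assumes K: "convex K" and b: "b \<in> K" and y: "y = u *\<^sub>R h + v *\<^sub>R b" and uv: "u \<ge> 0" "v \<ge> 0" "u + v = 1"
    and yK: "y \<notin> K" and q: "q \<in> closed_segment y h" "q \<in> K"
  shows False
proof (cases "u = 0")
  case True
  hence "y = b" using y uv by simp
  thus ?thesis using b yK by auto
next
  case False
  obtain t where t: "0 \<le> t" "t \<le> 1" "q = (1-t) *\<^sub>R y + t *\<^sub>R h"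
    using q(1) unfolding closed_segment_def by blast
  define mm where "mm = u + t * v"
  have mm: "mm > 0" using False uv t by (simp add: mm_def add_pos_nonneg)
  have e: "mm *\<^sub>R y = u *\<^sub>R q + (t * v) *\<^sub>R b"
  proof -
    have vv: "v = 1 - u" using uv(3) by linarith
    show ?thesis unfolding vec_eq_iff t(3) y vv mm_def by (simp add: algebra_simps)
  qed
  have "y = (u/mm) *\<^sub>R q + ((t * v)/mm) *\<^sub>R b"
  proof -
    have "y = (1/mm) *\<^sub>R (mm *\<^sub>R y)" using mm by simp
    also have "\<dots> = (u/mm) *\<^sub>R q + ((t * v)/mm) *\<^sub>R b" unfolding e by (simp add: scaleR_add_right)
    finally show ?thesis .
  qed
  moreover have "u/mm + (t * v)/mm = 1" using mm by (simp add: add_divide_distrib[symmetric] mm_def)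
  ultimately have "y \<in> K" using K q(2) b mm uv t
    by (metis convexD divide_nonneg_pos mult_nonneg_nonneg)
  thus False using yK by blast
qed

lemma mutual:
  fixes w z :: "real^'d"
  assumes w: "w \<in> convex hull (insert z X)" and z: "z \<in> convex hull (insert w X)"
    and wK: "w \<notin> convex hull X"
  shows "w = z"
proof (cases "X = {}")
  case True thus ?thesis using w by simp
next
  case False
  obtain a a' c where A: "a \<ge> 0" "a' \<ge> 0" "a + a' = 1" "c \<in> convex hull X" "w = a *\<^sub>R z + a' *\<^sub>R c"
    using w unfolding convex_hull_insert[OF False] by blast
  obtain b b' c' where B: "b \<ge> 0" "b' \<ge> 0" "b + b' = 1" "c' \<in> convex hull X" "z = b *\<^sub>R w + b' *\<^sub>R c'"
    using z unfolding convex_hull_insert[OF False] by blast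
  show ?thesis
  proof (cases "a = 1")
    case True thus ?thesis using A by simp
  next
    case a1: False
    have ab: "a * b < 1"
    proof -
      have "a < 1" using A a1 by linarith
      moreover have "b \<le> 1" using B by linarith
      ultimately show ?thesis using A(1) by (smt (verit) mult_left_le mult_nonneg_nonneg)
    qed
    have "w = a *\<^sub>R (b *\<^sub>R w + b' *\<^sub>R c') + a' *\<^sub>R c" using A(5) B(5) by simp
    hence e: "(1 - a*b) *\<^sub>R w = (a*b') *\<^sub>R c' + a' *\<^sub>R c" by (simp add: algebra_simps)
    have "w = (1/(1-a*b)) *\<^sub>R ((1 - a*b) *\<^sub>R w)" using ab by simp
    also have "\<dots> = ((a*b')/(1-a*b)) *\<^sub>R c' + (a'/(1-a*b)) *\<^sub>R c" unfolding e by (simp add: scaleR_add_right)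
    finally have "w = ((a*b')/(1-a*b)) *\<^sub>R c' + (a'/(1-a*b)) *\<^sub>R c" .
    moreover have "(a*b')/(1-a*b) + a'/(1-a*b) = 1"
    proof -
      have "b' = 1 - b" "a' = 1 - a" using A(3) B(3) by linarith+
      hence "a*b' + a' = 1 - a*b" by (simp only:) (simp add: algebra_simps)
      thus ?thesis using ab by (simp add: add_divide_distrib[symmetric])
    qed
    ultimately have "w \<in> convex hull X" using ab A B
      by (metis convexD convex_convex_hull diff_gt_0_iff_gt divide_nonneg_pos mult_nonneg_nonneg)
    thus ?thesis using wK by blast
  qed
qed

lemma card_le2:
  assumes "\<And>x y z. x \<in> G \<Longrightarrow> y \<in> G \<Longrightarrow> z \<in> G \<Longrightarrow> x \<noteq> y \<Longrightarrow> y \<noteq> z \<Longrightarrow> x \<noteq> z \<Longrightarrow> False"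
  shows "finite G \<and> card G \<le> 2"
proof (rule ccontr)
  assume "\<not> (finite G \<and> card G \<le> 2)"
  then obtain T where T: "T \<subseteq> G" "card T = 3"
  proof (cases "finite G")
    case True
    hence "3 \<le> card G" using \<open>\<not> (finite G \<and> card G \<le> 2)\<close> by simp
    thus ?thesis using that obtain_subset_with_card_n by metis
  next
    case False
    thus ?thesis using that infinite_arbitrarily_large by metis
  qed
  then obtain x y z where "T = {x,y,z}" "x \<noteq> y" "y \<noteq> z" "x \<noteq> z" by (auto simp: card_3_iff)
  thus False using assms T(1) by blast
qed

lemma hide_bound:
  fixes X :: "(real^'d) set"
  assumes "finite X"
  shows "\<exists>N. \<forall>H. hiding_set X H \<longrightarrow> finite H \<and> card H \<le> N"
proof (cases "X = {}")
  case True
  thus ?thesis by (auto simp: hiding_set_def)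
next
  case False
  have "bounded (convex hull X)" using assms by (simp add: compact_imp_bounded finite_imp_compact_convex_hull)
  then obtain B where B: "B > 0" "\<forall>x\<in>convex hull X. norm x \<le> B" by (auto simp: bounded_pos)
  hence K: "convex hull X \<subseteq> cball 0 B" by auto
  define F where "F = lattice \<inter> {x::real^'d. norm x \<le> 8*B}"
  have fF: "finite F" unfolding F_def by (rule fin_lat)
  show ?thesis
  proof (intro exI allI impI)
    fix H assume hs: "hiding_set X H"
    hence Hl: "H \<subseteq> lattice" by (auto simp: hiding_set_def)
    let ?G = "H - F"
    have big: "norm x \<ge> 8*B" if "x \<in> ?G" for x using that Hl by (auto simp: F_def)
    have G: "finite ?G \<and> card ?G \<le> 2"
    proof (rule card_le2)
      fix x y z assume "x \<in> ?G" "y \<in> ?G" "z \<in> ?G" "x \<noteq> y" "y \<noteq> z" "x \<noteq> z"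
      moreover have "\<And>a b. a \<in> H \<Longrightarrow> b \<in> H \<Longrightarrow> a \<noteq> b \<Longrightarrow> closed_segment a b \<inter> convex hull X \<noteq> {}"
        using hs by (auto simp: hiding_set_def segment_convex_hull)
      ultimately show False using three_lem[OF B(1) big big big K] by (metis DiffD1)
    qed
    have "H \<subseteq> F \<union> ?G" by blast
    moreover have "finite (F \<union> ?G)" using fF G by simp
    ultimately show "finite H \<and> card H \<le> card F + 2"
      by (meson G card_Un_le card_mono finite_subset order_trans add_left_mono)
  qed
qed

lemma obs_exists:
  fixes X :: "(real^'d) set"
  assumes fX: "finite X" and lc: "lattice_convex X" and h: "h \<in> lattice - X"
  shows "\<exists>y\<in>obs X. y \<in> convex hull (insert h X)"
proof -
  let ?P = "\<lambda>z. z \<in> lattice - X \<and> z \<in> convex hull (insert h X)"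
  let ?f = "\<lambda>z. card (convex hull (insert z X) \<inter> lattice)"
  have "?P h" using h by (simp add: hull_inc)
  then obtain z where z: "?P z" and zmin: "\<And>w. ?P w \<Longrightarrow> ?f z \<le> ?f w"
    using ex_has_least_nat[of ?P h ?f] by blast
  have Xl: "X \<subseteq> lattice" and XK: "convex hull X \<inter> lattice = X" using lc by (auto simp: lattice_convex_def)
  have sub: "convex hull (insert a X) \<subseteq> convex hull (insert b X)" if "a \<in> convex hull (insert b X)" for a b
    using that by (meson convex_convex_hull hull_minimal hull_subset insert_subset subset_insertI subset_trans)
  have "z \<in> obs X"
    unfolding obs_def
  proof (simp add: z[THEN conjunct1, simplified], rule ccontr)
    assume ne: "convex hull insert z X \<inter> lattice \<noteq> insert z X"
    have "insert z X \<subseteq> convex hull insert z X \<inter> lattice" using z Xl by (auto intro: hull_inc)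
    then obtain w where w: "w \<in> convex hull insert z X" "w \<in> lattice" "w \<notin> insert z X" using ne by blast
    have wK: "w \<notin> convex hull X" using w XK by blast
    have Pw: "?P w" using w sub[of z h] z by auto
    have zn: "z \<notin> convex hull (insert w X)" using mutual[OF w(1) _ wK] w(3) by blast
    have "convex hull insert w X \<inter> lattice \<subset> convex hull insert z X \<inter> lattice"
      using sub[OF w(1)] zn z by (auto intro: hull_inc)
    hence "?f w < ?f z" using hull_fin[OF fX] by (simp add: psubset_card_mono)
    thus False using zmin[OF Pw] by simp
  qed
  thus ?thesis using z by blast
qed

lemma part1:
  fixes X :: "(real^'d) set"
  assumes hs: "hiding_set X H" and h: "h \<in> H - obs X" and y: "y \<in> obs X" "y \<in> convex hull (insert h X)"
  shows "hiding_set X ((H - {h}) \<union> {y})"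
proof -
  have HA: "H \<subseteq> affine hull X \<inter> lattice - X" using hs by (auto simp: hiding_set_def)
  have hA: "h \<in> affine hull X" using h HA by auto
  hence Xne: "X \<noteq> {}" by auto
  have yl: "y \<in> lattice - X" using y(1) by (auto simp: obs_def)
  have "convex hull (insert h X) \<subseteq> affine hull X"
    using hA by (meson affine_affine_hull affine_imp_convex hull_minimal hull_subset insert_subset)
  hence yA: "y \<in> affine hull X" using y(2) by blast
  obtain u v c where uv: "u \<ge> 0" "v \<ge> 0" "u + v = 1" and c: "c \<in> convex hull X" and ye: "y = u *\<^sub>R h + v *\<^sub>R c"
    using y(2) unfolding convex_hull_insert[OF Xne] by blast
  have key: "convex hull {x, y} \<inter> convex hull X \<noteq> {}" if "x \<in> H" "x \<noteq> h" for x
  proof -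
    have "convex hull {x, h} \<inter> convex hull X \<noteq> {}" using hs that h by (auto simp: hiding_set_def)
    then obtain p where "p \<in> closed_segment x h" "p \<in> convex hull X" by (auto simp: segment_convex_hull)
    from cross_lem[OF convex_convex_hull this c ye uv] show ?thesis by (simp add: segment_convex_hull)
  qed
  show ?thesis unfolding hiding_set_def
  proof (intro conjI ballI impI)
    show "H - {h} \<union> {y} \<subseteq> affine hull X \<inter> lattice - X" using HA yA yl by auto
  next
    fix a b assume ab: "a \<in> H - {h} \<union> {y}" "b \<in> H - {h} \<union> {y}" "a \<noteq> b"
    show "convex hull {a, b} \<inter> convex hull X \<noteq> {}"
    proof (cases "a = y")
      case True
      hence "b \<in> H" "b \<noteq> h" using ab by auto
      thus ?thesis using key True by (simp add: insert_commute)
    next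
      case False
      hence a: "a \<in> H" "a \<noteq> h" using ab by auto
      show ?thesis
      proof (cases "b = y")
        case True thus ?thesis using key a by simp
      next
        case False
        hence "b \<in> H" using ab by auto
        thus ?thesis using a hs ab(3) by (auto simp: hiding_set_def)
      qed
    qed
  qed
qed

theorem lemma2p6:
  fixes X :: "(real ^ 'd) set"
  assumes "finite X" and "lattice_convex X"
  shows "(\<forall>H h y. hiding_set X H \<and> h \<in> H - obs X \<and> y \<in> obs X \<inter> convex hull (insert h X)
            \<longrightarrow> hiding_set X ((H - {h}) \<union> {y}))
       \<and> (\<exists>H'. hiding_set X H' \<and> H' \<subseteq> obs X \<and> finite H' \<and>
            (\<forall>H. hiding_set X H \<longrightarrow> finite H \<and> card H \<le> card H'))"
proof
  show "\<forall>H h y. hiding_set X H \<and> h \<in> H - obs X \<and> y \<in> obs X \<inter> convex hull (insert h X)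
            \<longrightarrow> hiding_set X ((H - {h}) \<union> {y})" using part1 by blast
next
  have XK: "convex hull X \<inter> lattice = X" using assms(2) by (auto simp: lattice_convex_def)
  obtain N where N: "\<And>H. hiding_set X H \<Longrightarrow> finite H \<and> card H \<le> N" using hide_bound[OF assms(1)] by blast
  have h0: "hiding_set X {}" by (simp add: hiding_set_def)
  obtain H0 where H0: "hiding_set X H0" "\<And>H. hiding_set X H \<Longrightarrow> card H \<le> card H0"
    using ex_has_greatest_nat[of "hiding_set X" "{}" card "N+1"] h0 N by (metis less_Suc_eq_le Suc_eq_plus1)
  let ?P = "\<lambda>H. hiding_set X H \<and> card H = card H0"
  let ?f = "\<lambda>H. card (H \<inter> obs X)"
  have bnd: "\<forall>H. ?P H \<longrightarrow> ?f H < N + 1"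
  proof (intro allI impI)
    fix H assume "?P H"
    hence "finite H" "card H \<le> N" using N by blast+
    moreover have "?f H \<le> card H" using \<open>finite H\<close> by (intro card_mono) auto
    ultimately show "?f H < N + 1" by linarith
  qed
  obtain H1 where H1: "?P H1" and H1max: "\<And>H. ?P H \<Longrightarrow> ?f H \<le> ?f H1"
    using ex_has_greatest_nat[of ?P H0 ?f "N+1", OF _ bnd] H0(1) by blast
  have fH1: "finite H1" using N H1 by blast
  have "H1 \<subseteq> obs X"
  proof (rule ccontr)
    assume "\<not> H1 \<subseteq> obs X"
    then obtain h where h: "h \<in> H1" "h \<notin> obs X" by blast
    have hl: "h \<in> lattice - X" using H1 h by (auto simp: hiding_set_def)
    obtain y where y: "y \<in> obs X" "y \<in> convex hull (insert h X)" using obs_exists[OF assms hl] by blast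
    have yl: "y \<in> lattice - X" using y(1) by (auto simp: obs_def)
    have yK: "y \<notin> convex hull X" using yl XK by blast
    have yh: "y \<noteq> h" using y h by auto
    have yH: "y \<notin> H1"
    proof
      assume "y \<in> H1"
      hence "convex hull {y, h} \<inter> convex hull X \<noteq> {}" using H1 h yh by (auto simp: hiding_set_def)
      then obtain q where q: "q \<in> closed_segment y h" "q \<in> convex hull X" by (auto simp: segment_convex_hull)
      have Xne: "X \<noteq> {}" using hl H1 h by (auto simp: hiding_set_def)
      obtain u v c where uv: "u \<ge> 0" "v \<ge> 0" "u + v = 1" and c: "c \<in> convex hull X" and ye: "y = u *\<^sub>R h + v *\<^sub>R c"
        using y(2) unfolding convex_hull_insert[OF Xne] by blast
      show False using no_back[OF convex_convex_hull c ye uv yK q] .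
    qed
    let ?H2 = "(H1 - {h}) \<union> {y}"
    have hs2: "hiding_set X ?H2" using part1[of X H1 h y] H1 h y by blast
    have "card ?H2 = card H1" using fH1 yH h(1) by (simp add: card_Suc_Diff1 card_gt_0_iff Suc_pred)
      (metis card_gt_0_iff empty_iff Suc_pred)
    hence P2: "?P ?H2" using hs2 H1 by simp
    have "?H2 \<inter> obs X = insert y (H1 \<inter> obs X)" using h y yH by auto
    hence "?f ?H2 = Suc (?f H1)" using fH1 yH by simp
    thus False using H1max[OF P2] by simp
  qed
  thus "\<exists>H'. hiding_set X H' \<and> H' \<subseteq> obs X \<and> finite H' \<and>
            (\<forall>H. hiding_set X H \<longrightarrow> finite H \<and> card H \<le> card H')"
    using H1 fH1 N H0(2) by metis
qed

end
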